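(* Let $\mathbb F$ be an algebraically closed field, $m\ge1$, and $L:\mathbb F\to\mathbb F^{m+1}$, $x\mapsto(x,x^3,x^9,\dots,x^{3^m})$, so $L_i(z)=z^{3^i}$ for $0\le i\le m$. Then for any $e_1,\dots,e_{m-1}\in\mathbb Q_{\ge0}$ there is some $i\in\{0,\dots,m\}$ with $z^{3^i}\notin 2\text{-}\mathrm{span}(z^{e_1},\dots,z^{e_{m-1}})$.
   Context: $z$ is an indeterminate, and for $e\in\mathbb Q_{\ge0}$, $z^e$ denotes an element of $\overline{\mathbb F(z)}$ from a fixed compatible system of fractional powers (so $z^1=z$, $z^0=1$, $z^ez^{e'}=z^{e+e'}$). For $p_1,\dots,p_r\in\overline{\mathbb F(z)}$, $2\text{-}\mathrm{span}(p_1,\dots,p_r)$ is the $\mathbb F$-linear span of all products $p_1^{a_1}\cdots p_r^{a_r}$ with $a_i\in\mathbb N$, $\sum_ia_i\le 2$. *)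

theory Defs
  imports "HOL-Computational_Algebra.Polynomial"
begin

definition is_subfield :: "'k::field set \<Rightarrow> bool" where
  "is_subfield F \<longleftrightarrow> 0 \<in> F \<and> 1 \<in> F \<and>
     (\<forall>x\<in>F. \<forall>y\<in>F. x + y \<in> F \<and> x * y \<in> F) \<and>
     (\<forall>x\<in>F. - x \<in> F \<and> inverse x \<in> F)"

definition alg_closed_subfield :: "'k::field set \<Rightarrow> bool" where
  "alg_closed_subfield F \<longleftrightarrow>
     (\<forall>p::'k poly. set (coeffs p) \<subseteq> F \<and> degree p > 0 \<longrightarrow> (\<exists>x\<in>F. poly p x = 0))"

definition transcendental_over :: "'k::field set \<Rightarrow> 'k \<Rightarrow> bool" where
  "transcendental_over F z \<longleftrightarrow>
     (\<forall>p::'k poly. set (coeffs p) \<subseteq> F \<and> poly p z = 0 \<longrightarrow> p = 0)"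

text \<open>A compatible system of fractional powers z^e, e a non-negative rational.\<close>
definition frac_power_system :: "'k::field \<Rightarrow> (rat \<Rightarrow> 'k) \<Rightarrow> bool" where
  "frac_power_system z pw \<longleftrightarrow> pw 0 = 1 \<and> pw 1 = z \<and>
     (\<forall>e e'. e \<ge> 0 \<longrightarrow> e' \<ge> 0 \<longrightarrow> pw (e + e') = pw e * pw e')"

definition F_span :: "'k::field set \<Rightarrow> 'k set \<Rightarrow> 'k set" where
  "F_span F S = {\<Sum>v\<in>A. c v * v | A c. finite A \<and> A \<subseteq> S \<and> (\<forall>v\<in>A. c v \<in> F)}"

definition two_span :: "'k::field set \<Rightarrow> (nat \<Rightarrow> 'k) \<Rightarrow> nat set \<Rightarrow> 'k set" where
  "two_span F p I = F_span F {\<Prod>i\<in>I. p i ^ a i | a::nat \<Rightarrow> nat. (\<Sum>i\<in>I. a i) \<le> 2}"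

end

theory Submission imports Defs begin

lemma coeffs_in_F_iff:
  assumes "(0::'k::field) \<in> F"
  shows "set (coeffs p) \<subseteq> F \<longleftrightarrow> (\<forall>n. coeff p n \<in> F)"
proof
  assume h: "set (coeffs p) \<subseteq> F"
  show "\<forall>n. coeff p n \<in> F"
  proof
    fix n
    show "coeff p n \<in> F"
    proof (cases "p \<noteq> 0 \<and> n \<le> degree p")
      case True then show ?thesis using coeff_in_coeffs h by blast
    next
      case False then show ?thesis using assms by (cases "p = 0") (auto simp: coeff_eq_0)
    qed
  qed
next
  assume h: "\<forall>n. coeff p n \<in> F"
  show "set (coeffs p) \<subseteq> F"
  proof
    fix x assume "x \<in> set (coeffs p)"
    then obtain n where "n < length (coeffs p)" "x = coeffs p ! n" by (metis in_set_conv_nth)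
    moreover have "p \<noteq> 0" using \<open>x \<in> set (coeffs p)\<close> by auto
    ultimately have "x = coeff p n" using coeffs_nth length_coeffs_degree by (metis less_Suc_eq_le)
    then show "x \<in> F" using h by simp
  qed
qed

lemma sub_sum:
  assumes "is_subfield F" "\<forall>x\<in>A. f x \<in> F"
  shows "sum f A \<in> F"
  using assms(2)
proof (induction A rule: infinite_finite_induct)
  case (infinite A) then show ?case using assms(1) by (simp add: is_subfield_def)
next
  case empty then show ?case using assms(1) by (simp add: is_subfield_def)
next
  case (insert x A) then show ?case using assms(1) by (simp add: is_subfield_def)
qed

lemma sub_diff:
  assumes "is_subfield F" "x \<in> F" "y \<in> F" shows "x - y \<in> F"
  using assms unfolding is_subfield_def by (metis diff_conv_add_uminus)

lemma poly_in_F: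
  assumes "is_subfield F" "\<forall>n. coeff p n \<in> F" "c \<in> F"
  shows "poly p c \<in> F"
  using assms(2)
proof (induction p)
  case 0 then show ?case using assms(1) by (simp add: is_subfield_def)
next
  case (pCons a p)
  have "\<forall>n. coeff p n \<in> F" using pCons.prems by (metis coeff_pCons_Suc)
  moreover have "a \<in> F" using pCons.prems by (metis coeff_pCons_0)
  ultimately show ?case using pCons.IH assms(1,3) by (simp add: is_subfield_def)
qed

lemma synth_in_F:
  assumes "is_subfield F" "\<forall>n. coeff p n \<in> F" "c \<in> F"
  shows "\<forall>n. coeff (synthetic_div p c) n \<in> F"
  using assms(2)
proof (induction p)
  case 0 then show ?case using assms(1) by (simp add: is_subfield_def)
next
  case (pCons a p)
  have h: "\<forall>n. coeff p n \<in> F" using pCons.prems by (metis coeff_pCons_Suc)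
  have "poly p c \<in> F" using poly_in_F[OF assms(1) h assms(3)] .
  then show ?case using pCons.IH[OF h] by (simp add: coeff_pCons split: nat.split)
qed

lemma not_in_F_transc:
  assumes "is_subfield F" "alg_closed_subfield F" "w \<notin> F"
  shows "\<forall>p. (\<forall>n. coeff p n \<in> F) \<and> poly p w = 0 \<longrightarrow> p = 0"
proof -
  have "\<And>p. degree p = d \<Longrightarrow> (\<forall>n. coeff p n \<in> F) \<Longrightarrow> poly p w = 0 \<Longrightarrow> p = 0" for d
  proof (induction d rule: less_induct)
    case (less d p)
    show ?case
    proof (cases "degree p = 0")
      case True
      then show ?thesis using less.prems poly_zero by blast
    next
      case False
      have z: "0 \<in> F" using assms(1) by (simp add: is_subfield_def)
      obtain r where r: "r \<in> F" "poly p r = 0"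
        using assms(2) False less.prems coeffs_in_F_iff[OF z] unfolding alg_closed_subfield_def by blast
      let ?q = "synthetic_div p r"
      have eq: "[:-r, 1:] * ?q = p" using synthetic_div_correct'[of r p] r by simp
      have "poly p w = (w - r) * poly ?q w" proof -
        have "poly p w = poly [:-r,1:] w * poly ?q w" by (subst eq[symmetric]) (rule poly_mult)
        then show ?thesis by simp
      qed
      moreover have "w \<noteq> r" using r assms(3) by auto
      ultimately have "poly ?q w = 0" using less.prems by simp
      moreover have "degree ?q < d" using False less.prems by (simp add: degree_synthetic_div)
      ultimately have "?q = 0" using less.IH synth_in_F[OF assms(1) _ r(1)] less.prems by blast
      then show ?thesis using eq by simp
    qed
  qed
  then show ?thesis by blast
qed


lemma pw_mult_nat:
  assumes "frac_power_system z pw" "e \<ge> 0"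
  shows "pw (of_nat a * e) = pw e ^ a"
proof (induction a)
  case 0 then show ?case using assms(1) by (simp add: frac_power_system_def)
next
  case (Suc a)
  have "pw (of_nat (Suc a) * e) = pw (of_nat a * e + e)" by (simp add: algebra_simps)
  also have "\<dots> = pw (of_nat a * e) * pw e" using assms by (simp add: frac_power_system_def)
  finally show ?case using Suc by simp
qed

lemma pw_prod:
  assumes "frac_power_system z pw" "finite I" "\<forall>j\<in>I. e j \<ge> 0"
  shows "(\<Prod>j\<in>I. pw (e j) ^ a j) = pw (\<Sum>j\<in>I. of_nat (a j) * e j)"
  using assms(2,3)
proof (induction I rule: finite_induct)
  case empty then show ?case using assms(1) by (simp add: frac_power_system_def)
next
  case (insert x I)
  have nn: "(\<Sum>j\<in>I. of_nat (a j) * e j) \<ge> 0" using insert.prems by (intro sum_nonneg) auto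
  have ex: "e x \<ge> 0" using insert.prems by auto
  have "(\<Prod>j\<in>insert x I. pw (e j) ^ a j) = pw (e x) ^ a x * pw (\<Sum>j\<in>I. of_nat (a j) * e j)"
    using insert by simp
  also have "\<dots> = pw (of_nat (a x) * e x) * pw (\<Sum>j\<in>I. of_nat (a j) * e j)"
    using pw_mult_nat[OF assms(1) ex] by simp
  also have "\<dots> = pw (of_nat (a x) * e x + (\<Sum>j\<in>I. of_nat (a j) * e j))"
    using assms(1) nn ex unfolding frac_power_system_def by simp
  finally show ?case using insert by simp
qed

lemma denom:
  assumes "finite I" "\<forall>j\<in>I. (e j::rat) \<ge> 0"
  shows "\<exists>N::nat. N > 0 \<and> (\<forall>j\<in>I. \<exists>k::nat. e j * of_nat N = of_nat k)"
  using assms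
proof (induction I rule: finite_induct)
  case empty then show ?case by (intro exI[of _ 1]) auto
next
  case (insert x I)
  then obtain N where N: "N > 0" "\<forall>j\<in>I. \<exists>k::nat. e j * of_nat N = of_nat k" by auto
  obtain p q where pq: "quotient_of (e x) = (p, q)" by (cases "quotient_of (e x)")
  have q: "q > 0" using quotient_of_denom_pos[OF pq] .
  have ex: "e x = of_int p / of_int q" using quotient_of_div[OF pq] .
  have p: "p \<ge> 0" using insert.prems ex q by (simp add: zero_le_divide_iff)
  define M where "M = N * nat q"
  have "M > 0" using N q by (simp add: M_def)
  moreover have "\<forall>j\<in>insert x I. \<exists>k::nat. e j * of_nat M = of_nat k"
  proof
    fix j assume "j \<in> insert x I"
    then show "\<exists>k::nat. e j * of_nat M = of_nat k"
    proof
      assume "j = x"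
      have "e j * of_nat M = of_int p * of_nat N" using ex q \<open>j = x\<close> by (simp add: M_def)
      also have "\<dots> = of_nat (nat p * N)" using p by simp
      finally show ?thesis by blast
    next
      assume "j \<in> I"
      then obtain k where "e j * of_nat N = of_nat k" using N by auto
      then have "e j * of_nat M = of_nat (k * nat q)" using q by (simp add: M_def)
      then show ?thesis by blast
    qed
  qed
  ultimately show ?case by blast
qed

lemma sub_pow:
  assumes "is_subfield F" "x \<in> F" shows "x ^ n \<in> F"
  by (induction n) (use assms in \<open>auto simp: is_subfield_def\<close>)

lemma comb:
  assumes "finite I" "\<forall>j\<in>I. (e j::rat) \<ge> 0" "sum a I \<le> (2::nat)"
    "(\<Sum>j\<in>I. of_nat (a j) * e j) = (t::rat)" "t > 0"
  shows "\<exists>j\<in>I. e j \<le> t \<and> t \<le> 2 * e j"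
proof -
  let ?J = "{j\<in>I. a j > 0}"
  have "?J \<noteq> {}"
  proof
    assume "?J = {}"
    then have "\<forall>j\<in>I. a j = 0" by auto
    then have "(\<Sum>j\<in>I. of_nat (a j) * e j) = 0" by simp
    then show False using assms by simp
  qed
  moreover have "finite ?J" using assms(1) by simp
  ultimately have "Max (e ` ?J) \<in> e ` ?J" by simp
  then obtain j0 where j0: "j0 \<in> ?J" "e j0 = Max (e ` ?J)" by auto
  have big: "\<forall>j\<in>?J. e j \<le> e j0" using j0 \<open>finite ?J\<close> by simp
  have "t \<le> (\<Sum>j\<in>I. of_nat (a j) * e j0)" unfolding assms(4)[symmetric]
  proof (rule sum_mono)
    fix j assume "j \<in> I"
    then show "of_nat (a j) * e j \<le> of_nat (a j) * e j0"
      using big by (cases "a j = 0") (auto intro: mult_left_mono)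
  qed
  also have "\<dots> = of_nat (sum a I) * e j0" by (simp add: sum_distrib_right)
  also have "\<dots> \<le> 2 * e j0"
  proof -
    have "of_nat (sum a I) \<le> (2::rat)" using assms(3) by (metis of_nat_le_iff of_nat_numeral)
    then show ?thesis using j0 assms(2) by (intro mult_right_mono) auto
  qed
  finally have u: "t \<le> 2 * e j0" .
  have "(1::rat) \<le> of_nat (a j0)" using j0 by simp
  then have "1 * e j0 \<le> of_nat (a j0) * e j0" using j0 assms(2) by (intro mult_right_mono) auto
  then have "e j0 \<le> of_nat (a j0) * e j0" by simp
  also have "\<dots> \<le> t" unfolding assms(4)[symmetric]
    using j0 assms(1,2) by (intro member_le_sum) auto
  finally show ?thesis using u j0(1) by blast
qed


theorem proposition9p7:
  fixes F :: "'k::field set" and z :: 'k and pw :: "rat \<Rightarrow> 'k"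
    and m :: nat and e :: "nat \<Rightarrow> rat"
  assumes "is_subfield F" and "alg_closed_subfield F"
    and "transcendental_over F z"
    and "frac_power_system z pw"
    and "m \<ge> 1"
    and "\<forall>j\<in>{1..m-1}. e j \<ge> 0"
  shows "\<exists>i\<in>{0..m}. z ^ (3 ^ i) \<notin> two_span F (\<lambda>j. pw (e j)) {1..m-1}"
proof (rule ccontr)
  assume H: "\<not> ?thesis"
  let ?I = "{1..m-1}"
  have sf: "is_subfield F" by fact
  have F0: "0 \<in> F" and F1: "1 \<in> F" using sf by (auto simp: is_subfield_def)
  obtain N :: nat where N: "N > 0" "\<forall>j\<in>?I. \<exists>k::nat. e j * of_nat N = of_nat k"
    using denom[of ?I e] assms(6) by auto
  then obtain kk where kk: "\<forall>j\<in>?I. e j * of_nat N = of_nat (kk j)" by metis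
  define w where "w = pw (1 / of_nat N)"
  have pwk: "pw (of_nat k / of_nat N) = w ^ k" for k
  proof -
    have "pw (of_nat k * (1 / of_nat N)) = w ^ k" unfolding w_def
      by (rule pw_mult_nat[OF assms(4)]) simp
    then show ?thesis by simp
  qed
  have zw: "z = w ^ N"
  proof -
    have "z = pw 1" using assms(4) by (simp add: frac_power_system_def)
    also have "\<dots> = pw (of_nat N / of_nat N)" using N by simp
    also have "\<dots> = w ^ N" by (rule pwk)
    finally show ?thesis .
  qed
  have zF: "z \<notin> F"
  proof
    assume "z \<in> F"
    then have "set (coeffs [:-z, 1:]) \<subseteq> F" using sf F1 by (auto simp: is_subfield_def)
    moreover have "poly [:-z, 1:] z = 0" by simp
    ultimately have "[:-z, 1:] = (0::'k poly)" using assms(3) unfolding transcendental_over_def by blast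
    then show False by simp
  qed
  have wF: "w \<notin> F"
  proof
    assume "w \<in> F"
    then have "z \<in> F" using zw sub_pow[OF sf] by simp
    then show False using zF by simp
  qed
  have trw: "\<forall>p. (\<forall>n. coeff p n \<in> F) \<and> poly p w = 0 \<longrightarrow> p = 0"
    using not_in_F_transc[OF sf assms(2) wF] .
  have key: "\<exists>a. sum a ?I \<le> (2::nat) \<and> (\<Sum>j\<in>?I. of_nat (a j) * e j) = of_nat (3 ^ i)"
    if i: "i \<in> {0..m}" for i
  proof (rule ccontr)
    assume Ha: "\<not> ?thesis"
    have "z ^ (3 ^ i) \<in> two_span F (\<lambda>j. pw (e j)) ?I" using H i by blast
    then obtain A c where A: "z ^ (3 ^ i) = (\<Sum>v\<in>A. c v * v)" "finite A"
      "A \<subseteq> {\<Prod>j\<in>?I. pw (e j) ^ a j | a::nat \<Rightarrow> nat. (\<Sum>j\<in>?I. a j) \<le> 2}"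
      "\<forall>v\<in>A. c v \<in> F"
      unfolding two_span_def F_span_def by blast
    have "\<exists>k. v = w ^ k \<and> k \<noteq> N * 3 ^ i" if v: "v \<in> A" for v
    proof -
      obtain a where a: "v = (\<Prod>j\<in>?I. pw (e j) ^ a j)" "sum a ?I \<le> 2" using v A(3) by blast
      define K where "K = (\<Sum>j\<in>?I. a j * kk j)"
      have "(\<Sum>j\<in>?I. of_nat (a j) * e j) * of_nat N = (\<Sum>j\<in>?I. of_nat (a j) * (e j * of_nat N))"
        by (simp add: sum_distrib_right mult.assoc)
      also have "\<dots> = of_nat K" using kk by (simp add: K_def)
      finally have fK: "(\<Sum>j\<in>?I. of_nat (a j) * e j) = of_nat K / of_nat N" using N
        by (simp add: eq_divide_eq)
      have "v = w ^ K" using a(1) pw_prod[OF assms(4) _ assms(6), of a] fK pwk by simp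
      moreover have "K \<noteq> N * 3 ^ i"
      proof
        assume "K = N * 3 ^ i"
        then have "(\<Sum>j\<in>?I. of_nat (a j) * e j) = (of_nat (3 ^ i) :: rat)" using fK N by simp
        then show False using Ha a(2) by blast
      qed
      ultimately show ?thesis by blast
    qed
    then obtain kv where kv: "\<forall>v\<in>A. v = w ^ kv v \<and> kv v \<noteq> N * 3 ^ i" by metis
    define p where "p = monom 1 (N * 3 ^ i) - (\<Sum>v\<in>A. monom (c v) (kv v))"
    have "poly p w = w ^ (N * 3 ^ i) - (\<Sum>v\<in>A. c v * w ^ kv v)"
      by (simp add: p_def poly_sum poly_monom)
    also have "(\<Sum>v\<in>A. c v * w ^ kv v) = (\<Sum>v\<in>A. c v * v)"
      using kv by (intro sum.cong) auto
    also have "w ^ (N * 3 ^ i) = z ^ (3 ^ i)" by (simp add: zw power_mult)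
    finally have p0: "poly p w = 0" using A(1) by simp
    have cF: "coeff p n \<in> F" for n
    proof -
      have "coeff p n = (if N * 3 ^ i = n then 1 else 0) - (\<Sum>v\<in>A. if kv v = n then c v else 0)"
        by (simp add: p_def coeff_sum coeff_monom)
      moreover have "(\<Sum>v\<in>A. if kv v = n then c v else 0) \<in> F"
        using A(4) F0 by (intro sub_sum[OF sf]) auto
      moreover have "(if N * 3 ^ i = n then 1 else 0) \<in> F" using F0 F1 by simp
      ultimately show ?thesis using sub_diff[OF sf] by simp
    qed
    have "coeff p (N * 3 ^ i) = 1 - (\<Sum>v\<in>A. if kv v = N * 3 ^ i then c v else 0)"
      by (simp add: p_def coeff_sum coeff_monom)
    also have "(\<Sum>v\<in>A. if kv v = N * 3 ^ i then c v else 0) = 0"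
      using kv by (intro sum.neutral) auto
    finally have "p \<noteq> 0" by auto
    then show False using trw cF p0 by blast
  qed
  have ex: "\<exists>j\<in>?I. e j \<le> of_nat (3 ^ i) \<and> of_nat (3 ^ i) \<le> 2 * e j" if i: "i \<in> {0..m}" for i
  proof -
    obtain a where a: "sum a ?I \<le> (2::nat)" "(\<Sum>j\<in>?I. of_nat (a j) * e j) = (of_nat (3 ^ i) :: rat)"
      using key[OF i] by blast
    show ?thesis by (rule comb[OF _ assms(6) a]) auto
  qed
  then obtain g where g: "\<forall>i\<in>{0..m}. g i \<in> ?I \<and> e (g i) \<le> of_nat (3 ^ i) \<and> of_nat (3 ^ i) \<le> 2 * e (g i)"
    by metis
  have inj: "inj_on g {0..m}"
  proof (rule inj_onI)
    have less: "False" if "i \<in> {0..m}" "i' \<in> {0..m}" "g i = g i'" "i < i'" for i i'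
    proof -
      let ?x = "e (g i)"
      have "(3::rat) ^ i' = 3 ^ (i' - i) * 3 ^ i" using that(4) by (simp add: power_add[symmetric])
      moreover have "(3::rat) ^ (i' - i) \<ge> 3" using that(4)
        by (metis One_nat_def Suc_leI power_increasing power_one_right zero_less_diff le_add_same_cancel1 linorder_not_le one_le_numeral)
      ultimately have "(3::rat) ^ i' \<ge> 3 * 3 ^ i" by simp
      moreover have "(3::rat) ^ i \<ge> ?x" using g that(1) by simp
      moreover have "(3::rat) ^ i' \<le> 2 * ?x" using g that(2,3) by simp
      moreover have "?x > 0"
      proof -
        have "(1::rat) \<le> 3 ^ i" by simp
        moreover have "(3::rat) ^ i \<le> 2 * ?x" using g that(1) by simp
        ultimately show ?thesis by linarith
      qed
      ultimately show False by linarith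
    qed
    fix i i' assume "i \<in> {0..m}" "i' \<in> {0..m}" "g i = g i'"
    then show "i = i'" using less[of i i'] less[of i' i] by (metis linorder_neqE_nat)
  qed
  have "g ` {0..m} \<subseteq> ?I" using g by auto
  then have "card {0..m} \<le> card ?I" using inj card_inj_on_le by blast
  then show False using assms(5) by simp
qed

end
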